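(* Assume the matching setting described in the context. Let $M=\{e_1,\ldots,e_k\}$ be a matching and $\sigma_k\in\Omega$ with $M\subseteq\sigma_k$. Run the following procedure: for $i=k,k-1,\ldots,1$, choose an orientation $(u,v)$ of $e_i=\{u,v\}$; select $(u',v')\in\mathcal{N}_{\sigma_i}(u,v)\setminus\overrightarrow{\{e_1,\ldots,e_{i-1}\}}$ uniformly at random; set $\sigma_{i-1}=\mathrm{Swap}_{\sigma_i}((u,v),(u',v'))$. Output $\sigma_0$. Then: (1) the procedure is well defined, in the sense that $e_i\in\sigma_i$ at iteration $i$; (2) it can output $\sigma_0\in\Omega$ if and only if $\hat\psi(M,\sigma_0)=\sigma_k$; (3) distinct executions, i.e. executions differing in the choice of $(u',v')$ for some $i$, produce distinct outputs.
   Context: Let $G=(V,E)$ be an undirected graph with $|V|=2n$ of one of the following two types: [P1] $G$ is the complete graph on $V$; [P2] $V$ is partitioned into sets $A_1,B_1,\ldots,A_r,B_r$ with $|A_i|=|B_i|$ and $E=\{\{u,v\}:u\in A_i,v\in B_i,i\in[r]\}$. In both cases, whenever $(u',u,v,v')$ is a path in $G$ with distinct nodes, $\{u',v'\}\in E$. $\Omega$ is the set of perfect matchings of $G$ (sets of edges). For a single edge $e=\{u,v\}$ and $\sigma\in\Omega$, let $u',v'$ be the nodes with $\{u,u'\},\{v,v'\}\in\sigma$, and set $\hat\psi(\{e\},\sigma)=(\sigma\setminus\{\{u,u'\},\{v,v'\}\})\cup\{\{u,v\},\{u',v'\}\}$. For a matching $M=\{e_1,\ldots,e_k\}$ set $\hat\psi(M,\sigma)=\sigma_k$,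 where $\sigma_0=\sigma$ and $\sigma_i=\hat\psi(\{e_i\},\sigma_{i-1})$; this is independent of the ordering of $M$. For $S\subseteq E$ let $\overrightarrow S=\{(u,v),(v,u):\{u,v\}\in S\}$. For $\sigma\in\Omega$ and $(u,v),(u',v')\in\overrightarrow\sigma$ let $$\mathrm{Swap}_\sigma((u,v),(u',v'))=(\sigma\setminus\{\{u,v\},\{u',v'\}\})\cup\{\{u,u'\},\{v,v'\}\},$$ and let $\mathcal{N}_\sigma(u,v)=\{(u',v')\in\overrightarrow\sigma:\mathrm{Swap}_\sigma((u,v),(u',v'))\in\Omega\}$. *)

theory Defs
  imports Main
begin

definition type_P1 :: "'a set \<Rightarrow> 'a set set \<Rightarrow> bool" where
  "type_P1 V E \<longleftrightarrow> E = {{u, v} | u v. u \<in> V \<and> v \<in> V \<and> u \<noteq> v}"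

definition type_P2 :: "'a set \<Rightarrow> 'a set set \<Rightarrow> bool" where
  "type_P2 V E \<longleftrightarrow> (\<exists>(r::nat) (A::nat \<Rightarrow> 'a set) (B::nat \<Rightarrow> 'a set).
      (\<Union>i\<in>{1..r}. A i \<union> B i) = V
    \<and> (\<forall>i\<in>{1..r}. \<forall>j\<in>{1..r}. A i \<inter> B j = {})
    \<and> (\<forall>i\<in>{1..r}. \<forall>j\<in>{1..r}. i \<noteq> j \<longrightarrow> A i \<inter> A j = {} \<and> B i \<inter> B j = {})
    \<and> (\<forall>i\<in>{1..r}. card (A i) = card (B i))
    \<and> E = {{u, v} | u v i. i \<in> {1..r} \<and> u \<in> A i \<and> v \<in> B i})"

definition perfect_matchings :: "'a set \<Rightarrow> 'a set set \<Rightarrow> 'a set set set" where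
  "perfect_matchings V E = {\<sigma>. \<sigma> \<subseteq> E \<and> (\<forall>v\<in>V. \<exists>!e. e \<in> \<sigma> \<and> v \<in> e)}"

definition partner :: "'a set set \<Rightarrow> 'a \<Rightarrow> 'a" where
  "partner \<sigma> u = (THE w. {u, w} \<in> \<sigma>)"

definition psi1 :: "'a set set \<Rightarrow> 'a set \<Rightarrow> 'a set set" where
  "psi1 \<sigma> e = (let u = (SOME u. u \<in> e); v = (SOME v. v \<in> e \<and> v \<noteq> u);
                    u' = partner \<sigma> u; v' = partner \<sigma> v
                in (\<sigma> - {{u, u'}, {v, v'}}) \<union> {{u, v}, {u', v'}})"

text \<open>psi_hat applied to the matching listed as [e_1, ..., e_k]: e_1 is processed first.\<close>
definition psi_hat :: "'a set list \<Rightarrow> 'a set set \<Rightarrow> 'a set set" where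
  "psi_hat es \<sigma> = fold (\<lambda>e s. psi1 s e) es \<sigma>"

definition arrows :: "'a set set \<Rightarrow> ('a \<times> 'a) set" where
  "arrows S = {(u, v). {u, v} \<in> S}"

definition Swap :: "'a set set \<Rightarrow> 'a \<times> 'a \<Rightarrow> 'a \<times> 'a \<Rightarrow> 'a set set" where
  "Swap \<sigma> a b = (case a of (u, v) \<Rightarrow> case b of (u', v') \<Rightarrow>
      (\<sigma> - {{u, v}, {u', v'}}) \<union> {{u, u'}, {v, v'}})"

definition Nbhd :: "'a set \<Rightarrow> 'a set set \<Rightarrow> 'a set set \<Rightarrow> 'a \<times> 'a \<Rightarrow> ('a \<times> 'a) set" where
  "Nbhd V E \<sigma> a = {b \<in> arrows \<sigma>. Swap \<sigma> a b \<in> perfect_matchings V E}"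

text \<open>ori i \<sigma> is the orientation of e_i chosen at iteration i when the current
  matching is \<sigma>; c i is the choice (u',v') at iteration i.
  traj ori c \<sigma>k k j is the state after j iterations, i.e. \<sigma>_(k-j).\<close>
fun traj :: "(nat \<Rightarrow> 'a set set \<Rightarrow> 'a \<times> 'a) \<Rightarrow> (nat \<Rightarrow> 'a \<times> 'a) \<Rightarrow> 'a set set \<Rightarrow> nat \<Rightarrow> nat \<Rightarrow> 'a set set" where
  "traj ori c \<sigma>k k 0 = \<sigma>k"
| "traj ori c \<sigma>k k (Suc j) =
     Swap (traj ori c \<sigma>k k j) (ori (k - j) (traj ori c \<sigma>k k j)) (c (k - j))"

definition sigma_at :: "(nat \<Rightarrow> 'a set set \<Rightarrow> 'a \<times> 'a) \<Rightarrow> (nat \<Rightarrow> 'a \<times> 'a) \<Rightarrow> 'a set set \<Rightarrow> nat \<Rightarrow> nat \<Rightarrow> 'a set set" where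
  "sigma_at ori c \<sigma>k k i = traj ori c \<sigma>k k (k - i)"

definition valid_run :: "'a set \<Rightarrow> 'a set set \<Rightarrow> (nat \<Rightarrow> 'a set) \<Rightarrow> nat \<Rightarrow>
    (nat \<Rightarrow> 'a set set \<Rightarrow> 'a \<times> 'a) \<Rightarrow> 'a set set \<Rightarrow> (nat \<Rightarrow> 'a \<times> 'a) \<Rightarrow> bool" where
  "valid_run V E e k ori \<sigma>k c \<longleftrightarrow>
     (\<forall>i\<in>{1..k}. c i \<in> Nbhd V E (sigma_at ori c \<sigma>k k i) (ori i (sigma_at ori c \<sigma>k k i))
                         - arrows (e ` {1..<i}))"

end

theory Submission
  imports Defs
begin

definition goodG :: "'a set \<Rightarrow> 'a set set \<Rightarrow> bool" where
  "goodG V E \<longleftrightarrow> (\<forall>x\<in>E. \<exists>a b. x = {a,b} \<and> a \<noteq> b \<and> a \<in> V \<and> b \<in> V) \<and>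
     (\<forall>a b c d. {a,b} \<in> E \<longrightarrow> {b,c} \<in> E \<longrightarrow> {c,d} \<in> E \<longrightarrow> a \<noteq> b \<longrightarrow> a \<noteq> c \<longrightarrow> a \<noteq> d
        \<longrightarrow> b \<noteq> c \<longrightarrow> b \<noteq> d \<longrightarrow> c \<noteq> d \<longrightarrow> {a,d} \<in> E)"

lemma P1_good: "type_P1 V E \<Longrightarrow> goodG V E"
  unfolding type_P1_def goodG_def by (auto simp: doubleton_eq_iff)

lemma P2_good:
  assumes "type_P2 V E" shows "goodG V E"
proof -
  obtain r A B where U: "(\<Union>i\<in>{1..r::nat}. A i \<union> B i) = V"
    and AB: "\<forall>i\<in>{1..r}. \<forall>j\<in>{1..r}. A i \<inter> B j = {}"
    and AA: "\<forall>i\<in>{1..r}. \<forall>j\<in>{1..r}. i \<noteq> j \<longrightarrow> A i \<inter> A j = {} \<and> B i \<inter> B j = {}"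
    and Ed: "E = {{u, v} | u v i. i \<in> {1..r} \<and> u \<in> A i \<and> v \<in> B i}"
    using assms unfolding type_P2_def by blast
  have idx: "\<exists>i\<in>{1..r}. (x \<in> A i \<and> y \<in> B i) \<or> (x \<in> B i \<and> y \<in> A i)" if "{x,y} \<in> E" for x y
    using that unfolding Ed by (auto simp: doubleton_eq_iff)
  have uA: "i = j" if "x \<in> A i" "x \<in> A j" "i \<in> {1..r}" "j \<in> {1..r}" for x i j
    using AA that by blast
  have uB: "i = j" if "x \<in> B i" "x \<in> B j" "i \<in> {1..r}" "j \<in> {1..r}" for x i j
    using AA that by blast
  have nAB: "False" if "x \<in> A i" "x \<in> B j" "i \<in> {1..r}" "j \<in> {1..r}" for x i j
    using AB that by blast
  have inE: "{x,y} \<in> E" if "x \<in> A i" "y \<in> B i" "i \<in> {1..r}" for x y i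
    unfolding Ed using that by blast
  have part1: "\<forall>x\<in>E. \<exists>a b. x = {a,b} \<and> a \<noteq> b \<and> a \<in> V \<and> b \<in> V"
  proof
    fix x assume "x \<in> E"
    then obtain u v i where "x = {u,v}" "i \<in> {1..r}" "u \<in> A i" "v \<in> B i" unfolding Ed by blast
    then show "\<exists>a b. x = {a,b} \<and> a \<noteq> b \<and> a \<in> V \<and> b \<in> V"
      using nAB U by blast
  qed
  have part2: "{a,d} \<in> E" if h: "{a,b} \<in> E" "{b,c} \<in> E" "{c,d} \<in> E" for a b c d
  proof -
    obtain i where i: "i \<in> {1..r}" "(b \<in> A i \<and> c \<in> B i) \<or> (b \<in> B i \<and> c \<in> A i)" using idx[OF h(2)] by blast
    obtain j where j: "j \<in> {1..r}" "(a \<in> A j \<and> b \<in> B j) \<or> (a \<in> B j \<and> b \<in> A j)" using idx[OF h(1)] by blast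
    obtain l where l: "l \<in> {1..r}" "(c \<in> A l \<and> d \<in> B l) \<or> (c \<in> B l \<and> d \<in> A l)" using idx[OF h(3)] by blast
    show ?thesis
    proof (cases "b \<in> A i \<and> c \<in> B i")
      case True
      then have "a \<in> B i" using j i uA uB nAB by metis
      moreover have "d \<in> A i" using l i True uA uB nAB by metis
      ultimately have "{d,a} \<in> E" using inE i by blast
      then show ?thesis by (simp add: insert_commute)
    next
      case False
      then have F: "b \<in> B i" "c \<in> A i" using i by auto
      then have "a \<in> A i" using j i uA uB nAB by metis
      moreover have "d \<in> B i" using l i F uA uB nAB by metis
      ultimately show ?thesis using inE i by blast
    qed
  qed
  show ?thesis unfolding goodG_def using part1 part2 by blast
qed


lemma arrows_iff[simp]: "(a,b) \<in> arrows S \<longleftrightarrow> {a,b} \<in> S"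
  unfolding arrows_def by simp

lemma Swap_eq: "Swap \<sigma> (u,v) (u',v') = (\<sigma> - {{u,v},{u',v'}}) \<union> {{u,u'},{v,v'}}"
  unfolding Swap_def by simp

lemma gen_set: "X \<notin> \<sigma> \<Longrightarrow> Y \<notin> \<sigma> \<Longrightarrow> P \<in> \<sigma> \<Longrightarrow> Q \<in> \<sigma> \<Longrightarrow> ((\<sigma> - {P,Q}) \<union> {X,Y} - {X,Y}) \<union> {P,Q} = \<sigma>"
  by auto

lemma gen_set2: "P \<in> \<sigma> \<Longrightarrow> (\<sigma> - {P,P}) \<union> {P,P} = \<sigma>"
  by auto

lemma two_disj: "x \<in> {P,Q} \<Longrightarrow> y \<in> {P,Q} \<Longrightarrow> w \<in> x \<Longrightarrow> w \<in> y \<Longrightarrow> P \<inter> Q = {} \<Longrightarrow> x = y"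
  by auto

context
  fixes V :: "'a set" and E :: "'a set set"
  assumes good: "goodG V E"
begin

lemma pm_sub: "\<sigma> \<in> perfect_matchings V E \<Longrightarrow> \<sigma> \<subseteq> E"
  unfolding perfect_matchings_def by blast

lemma E_edge: "x \<in> E \<Longrightarrow> \<exists>a b. x = {a,b} \<and> a \<noteq> b \<and> a \<in> V \<and> b \<in> V"
  using good unfolding goodG_def by blast

lemma E_pair: "{a,b} \<in> E \<Longrightarrow> a \<noteq> b \<and> a \<in> V \<and> b \<in> V"
  using E_edge[of "{a,b}"] by (auto simp: doubleton_eq_iff)

lemma E_path: "{a,b} \<in> E \<Longrightarrow> {b,c} \<in> E \<Longrightarrow> {c,d} \<in> E \<Longrightarrow> a \<noteq> c \<Longrightarrow> a \<noteq> d \<Longrightarrow> b \<noteq> d \<Longrightarrow> {a,d} \<in> E"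
  using good E_pair unfolding goodG_def by metis

lemma pm_pair: "\<sigma> \<in> perfect_matchings V E \<Longrightarrow> {a,b} \<in> \<sigma> \<Longrightarrow> a \<noteq> b \<and> a \<in> V \<and> b \<in> V"
  using pm_sub E_pair by blast

lemma pm_unique:
  assumes "\<sigma> \<in> perfect_matchings V E" "{a,b} \<in> \<sigma>" "{a,c} \<in> \<sigma>" shows "b = c"
proof -
  have a: "a \<in> V" "a \<noteq> b" "a \<noteq> c" using pm_pair assms by blast+
  then have "\<exists>!e. e \<in> \<sigma> \<and> a \<in> e" using assms(1) unfolding perfect_matchings_def by blast
  then have "{a,b} = {a,c}" using assms by blast
  then show ?thesis using a by (auto simp: doubleton_eq_iff)
qed

lemma pm_unique2:
  assumes "\<sigma> \<in> perfect_matchings V E" "x \<in> \<sigma>" "y \<in> \<sigma>" "a \<in> x" "a \<in> y" shows "x = y"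
proof -
  have "a \<in> V" using assms pm_sub E_edge by blast
  then show ?thesis using assms unfolding perfect_matchings_def by blast
qed

lemma pm_exists:
  assumes "\<sigma> \<in> perfect_matchings V E" "a \<in> V" shows "\<exists>b. {a,b} \<in> \<sigma>"
proof -
  obtain x where "x \<in> \<sigma>" "a \<in> x" using assms unfolding perfect_matchings_def by blast
  moreover then obtain p q where "x = {p,q}" using assms pm_sub E_edge by blast
  ultimately show ?thesis by (auto simp: insert_commute)
qed

lemma partner_eq:
  assumes "\<sigma> \<in> perfect_matchings V E" "{a,b} \<in> \<sigma>" shows "partner \<sigma> a = b"
  unfolding partner_def using pm_unique[OF assms(1,2)] assms(2) by (intro the_equality) blast+

lemma psi1_eq:
  assumes "a \<noteq> b"
  shows "psi1 \<sigma> {a,b} = (\<sigma> - {{a, partner \<sigma> a},{b, partner \<sigma> b}}) \<union> {{a,b},{partner \<sigma> a, partner \<sigma> b}}"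
proof -
  have s: "(SOME u. u \<in> {a,b}) \<in> {a,b}" by (rule someI[of _ a]) simp
  show ?thesis
  proof (cases "(SOME u. u \<in> {a,b}) = a")
    case True
    have "(SOME v. v \<in> {a,b} \<and> v \<noteq> a) = b" using assms by (intro some_equality) auto
    then show ?thesis unfolding psi1_def Let_def True by simp
  next
    case False
    then have F: "(SOME u. u \<in> {a,b}) = b" using s by auto
    have "(SOME v. v \<in> {a,b} \<and> v \<noteq> b) = a" using assms by (intro some_equality) auto
    then show ?thesis unfolding psi1_def Let_def F by (auto simp: insert_commute)
  qed
qed


lemma swap_pm:
  assumes pm: "\<sigma> \<in> perfect_matchings V E" and ab: "{a,b} \<in> \<sigma>" and cd: "{c,d} \<in> \<sigma>"
    and d: "a \<noteq> c" "a \<noteq> d" "b \<noteq> c" "b \<noteq> d"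
    and E1: "{a,c} \<in> E" and E2: "{b,d} \<in> E"
  shows "(\<sigma> - {{a,b},{c,d}}) \<union> {{a,c},{b,d}} \<in> perfect_matchings V E"
proof -
  let ?S = "(\<sigma> - {{a,b},{c,d}}) \<union> {{a,c},{b,d}}"
  have sub: "?S \<subseteq> E" using pm_sub[OF pm] E1 E2 by blast
  have old: "x \<in> \<sigma>" if "x \<in> ?S" "w \<in> x" "w \<notin> {a,b,c,d}" for x w
  proof (rule ccontr)
    assume "x \<notin> \<sigma>"
    then have "x = {a,c} \<or> x = {b,d}" using that(1) by blast
    then show False using that(2,3) by blast
  qed
  have oldn: "x \<notin> \<sigma>" if "w \<in> x" "w \<in> {a,b,c,d}" "x \<noteq> {a,b}" "x \<noteq> {c,d}" for x w
  proof
    assume "x \<in> \<sigma>"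
    have "w \<in> {a,b} \<or> w \<in> {c,d}" using that(2) by blast
    then show False using pm_unique2[OF pm \<open>x \<in> \<sigma>\<close> ab that(1)] pm_unique2[OF pm \<open>x \<in> \<sigma>\<close> cd that(1)] that(3,4) by blast
  qed
  have "\<exists>!x. x \<in> ?S \<and> w \<in> x" if w: "w \<in> V" for w
  proof (cases "w \<in> {a,b,c,d}")
    case True
    have dj: "{a,c} \<inter> {b,d} = {}" using d pm_pair[OF pm ab] pm_pair[OF pm cd] by blast
    have wc: "w \<in> {a,c} \<or> w \<in> {b,d}" using True by blast
    then obtain x0 where x0: "x0 \<in> {{a,c},{b,d}}" "w \<in> x0" by blast
    have x0S: "x0 \<in> ?S" using x0(1) by blast
    have mem: "x \<in> {{a,c},{b,d}}" if "x \<in> ?S" "w \<in> x" for x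
    proof -
      have "x \<notin> \<sigma> - {{a,b},{c,d}}" using oldn[OF that(2) True] by blast
      then show ?thesis using that(1) by blast
    qed
    show ?thesis
    proof (rule ex1I[of _ x0])
      show "x0 \<in> ?S \<and> w \<in> x0" using x0S x0 by blast
      fix y assume "y \<in> ?S \<and> w \<in> y"
      then have "y \<in> {{a,c},{b,d}}" "w \<in> y" using mem by blast+
      then show "y = x0" using two_disj[OF _ x0(1) _ x0(2) dj] by blast
    qed
  next
    case False
    obtain x where x: "x \<in> \<sigma>" "w \<in> x" using pm w by (auto simp: perfect_matchings_def)
    have xn: "x \<noteq> {a,b}" "x \<noteq> {c,d}" using x(2) False by auto
    have xS: "x \<in> ?S" using x(1) xn by blast
    show ?thesis
    proof (rule ex1I[of _ x])
      show "x \<in> ?S \<and> w \<in> x" using xS x by blast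
      fix y assume y: "y \<in> ?S \<and> w \<in> y"
      then have "y \<in> \<sigma>" using old False by blast
      then show "y = x" using pm_unique2[OF pm _ x(1) _ x(2)] y by blast
    qed
  qed
  then show ?thesis using sub by (simp add: perfect_matchings_def)
qed

lemma psi1_id:
  assumes pm: "\<sigma> \<in> perfect_matchings V E" and uv: "{u,v} \<in> \<sigma>"
  shows "psi1 \<sigma> {u,v} = \<sigma>"
proof -
  have "u \<noteq> v" using pm_pair[OF pm uv] by blast
  moreover have "partner \<sigma> u = v" using partner_eq[OF pm uv] .
  moreover have "partner \<sigma> v = u" using partner_eq[OF pm, of v u] uv by (simp add: insert_commute)
  ultimately have "psi1 \<sigma> {u,v} = (\<sigma> - {{u,v},{v,u}}) \<union> {{u,v},{v,u}}" by (simp add: psi1_eq)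
  also have "\<dots> = (\<sigma> - {{u,v},{u,v}}) \<union> {{u,v},{u,v}}" by (simp add: insert_commute)
  also have "\<dots> = \<sigma>" using gen_set2[OF uv] .
  finally show ?thesis .
qed

lemma forward_step:
  assumes pm: "\<sigma> \<in> perfect_matchings V E" and uv: "{u,v} \<in> \<sigma>" and uv': "{u',v'} \<in> \<sigma>"
    and pmS: "Swap \<sigma> (u,v) (u',v') \<in> perfect_matchings V E"
  shows "psi1 (Swap \<sigma> (u,v) (u',v')) {u,v} = \<sigma>"
proof (cases "{u',v'} = {u,v}")
  case True
  then have "(u' = u \<and> v' = v) \<or> (u' = v \<and> v' = u)" by (auto simp: doubleton_eq_iff)
  then show ?thesis
  proof
    assume "u' = u \<and> v' = v"
    then have "{u,u} \<in> Swap \<sigma> (u,v) (u',v')" by (simp add: Swap_eq)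
    then show ?thesis using pm_pair[OF pmS, of u u] by simp
  next
    assume h: "u' = v \<and> v' = u"
    have "Swap \<sigma> (u,v) (u',v') = (\<sigma> - {{u,v},{u,v}}) \<union> {{u,v},{u,v}}"
      using h by (simp add: Swap_eq insert_commute)
    also have "\<dots> = \<sigma>" using gen_set2[OF uv] .
    finally show ?thesis using psi1_id[OF pm uv] by simp
  qed
next
  case False
  have u'n: "u' \<noteq> u" "u' \<noteq> v" "v' \<noteq> u" "v' \<noteq> v"
    using pm_unique2[OF pm uv uv', of u] pm_unique2[OF pm uv uv', of v] False by auto
  have uvd: "u \<noteq> v" using pm_pair[OF pm uv] by blast
  have n1: "{u,u'} \<notin> \<sigma>"
  proof
    assume "{u,u'} \<in> \<sigma>" then have "{u,u'} = {u,v}" using pm_unique2[OF pm _ uv, of _ u] by blast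
    then show False using u'n by (auto simp: doubleton_eq_iff)
  qed
  have n2: "{v,v'} \<notin> \<sigma>"
  proof
    assume "{v,v'} \<in> \<sigma>" then have "{v,v'} = {u,v}" using pm_unique2[OF pm _ uv, of _ v] by blast
    then show False using u'n by (auto simp: doubleton_eq_iff)
  qed
  let ?S = "Swap \<sigma> (u,v) (u',v')"
  have S: "?S = (\<sigma> - {{u,v},{u',v'}}) \<union> {{u,u'},{v,v'}}" by (simp add: Swap_eq)
  have p1: "partner ?S u = u'" using partner_eq[OF pmS, of u u'] S by simp
  have p2: "partner ?S v = v'" using partner_eq[OF pmS, of v v'] S by simp
  have "psi1 ?S {u,v} = (?S - {{u,u'},{v,v'}}) \<union> {{u,v},{u',v'}}"
    using psi1_eq[OF uvd] p1 p2 by simp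
  also have "\<dots> = \<sigma>" unfolding S using gen_set[OF n1 n2 uv uv'] .
  finally show ?thesis .
qed

lemma backward_step:
  assumes pm: "\<tau> \<in> perfect_matchings V E" and uvE: "{u,v} \<in> E"
  defines "p \<equiv> partner \<tau> u" and "q \<equiv> partner \<tau> v"
  shows "{u,p} \<in> \<tau>" "{v,q} \<in> \<tau>" "psi1 \<tau> {u,v} \<in> perfect_matchings V E"
    "{u,v} \<in> psi1 \<tau> {u,v}" "{p,q} \<in> psi1 \<tau> {u,v}"
    "Swap (psi1 \<tau> {u,v}) (u,v) (p,q) = \<tau>"
    "\<And>x. x \<in> \<tau> \<Longrightarrow> u \<notin> x \<Longrightarrow> v \<notin> x \<Longrightarrow> x \<in> psi1 \<tau> {u,v}"
proof -
  have uv: "u \<noteq> v" "u \<in> V" "v \<in> V" using E_pair[OF uvE] by auto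
  obtain p0 where p0: "{u,p0} \<in> \<tau>" using pm_exists[OF pm uv(2)] by blast
  obtain q0 where q0: "{v,q0} \<in> \<tau>" using pm_exists[OF pm uv(3)] by blast
  have pp: "p = p0" unfolding p_def using partner_eq[OF pm p0] .
  have qq: "q = q0" unfolding q_def using partner_eq[OF pm q0] .
  have up: "{u,p} \<in> \<tau>" using p0 pp by simp
  have vq: "{v,q} \<in> \<tau>" using q0 qq by simp
  show "{u,p} \<in> \<tau>" "{v,q} \<in> \<tau>" by (fact up, fact vq)
  have ps: "psi1 \<tau> {u,v} = (\<tau> - {{u,p},{v,q}}) \<union> {{u,v},{p,q}}"
    using psi1_eq[OF uv(1)] unfolding p_def q_def by simp
  have pu: "p \<noteq> u" using pm_pair[OF pm up] by blast
  have qv: "q \<noteq> v" using pm_pair[OF pm vq] by blast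
  show "\<And>x. x \<in> \<tau> \<Longrightarrow> u \<notin> x \<Longrightarrow> v \<notin> x \<Longrightarrow> x \<in> psi1 \<tau> {u,v}"
  proof -
    fix x assume x: "x \<in> \<tau>" "u \<notin> x" "v \<notin> x"
    then have "x \<noteq> {u,p}" "x \<noteq> {v,q}" by auto
    then show "x \<in> psi1 \<tau> {u,v}" unfolding ps using x(1) by blast
  qed
  show "{u,v} \<in> psi1 \<tau> {u,v}" "{p,q} \<in> psi1 \<tau> {u,v}" unfolding ps by blast+
  show "psi1 \<tau> {u,v} \<in> perfect_matchings V E" "Swap (psi1 \<tau> {u,v}) (u,v) (p,q) = \<tau>"
  proof -
    have "psi1 \<tau> {u,v} \<in> perfect_matchings V E \<and> Swap (psi1 \<tau> {u,v}) (u,v) (p,q) = \<tau>"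
    proof (cases "{u,v} \<in> \<tau>")
      case True
      have "p = v" using pm_unique[OF pm up True] .
      moreover have "q = u" using pm_unique[OF pm vq, of u] True by (simp add: insert_commute)
      moreover have "Swap \<tau> (u,v) (v,u) = \<tau>"
        using gen_set2[OF True] by (simp add: Swap_eq insert_commute)
      ultimately show ?thesis using psi1_id[OF pm True] pm by simp
    next
      case False
      have pv: "p \<noteq> v" using False up by auto
      have qu: "q \<noteq> u" using False vq by (auto simp: insert_commute)
      have pq: "p \<noteq> q"
      proof
        assume "p = q"
        then have "{p,u} \<in> \<tau>" "{p,v} \<in> \<tau>" using up vq by (simp_all add: insert_commute)
        then show False using pm_unique[OF pm] uv(1) by blast
      qed
      have pqE: "{p,q} \<in> E"
      proof (rule E_path[of p u v q])
        show "{p,u} \<in> E" using pm_sub[OF pm] up by (auto simp: insert_commute)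
        show "{u,v} \<in> E" by (fact uvE)
        show "{v,q} \<in> E" using pm_sub[OF pm] vq by auto
      qed (use pv pq qu in auto)
      have "(\<tau> - {{u,p},{v,q}}) \<union> {{u,v},{p,q}} \<in> perfect_matchings V E"
        by (rule swap_pm[OF pm up vq]) (use uv(1) qu pv pq uvE pqE in auto)
      then have pm2: "psi1 \<tau> {u,v} \<in> perfect_matchings V E" using ps by simp
      have npq: "{p,q} \<notin> \<tau>"
      proof
        assume "{p,q} \<in> \<tau>"
        moreover have "{p,u} \<in> \<tau>" using up by (simp add: insert_commute)
        ultimately have "q = u" using pm_unique[OF pm] by blast
        then show False using qu by simp
      qed
      have "Swap (psi1 \<tau> {u,v}) (u,v) (p,q) = (((\<tau> - {{u,p},{v,q}}) \<union> {{u,v},{p,q}}) - {{u,v},{p,q}}) \<union> {{u,p},{v,q}}"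
        unfolding ps Swap_eq ..
      also have "\<dots> = \<tau>" using gen_set[OF False npq up vq] .
      finally show ?thesis using pm2 by simp
    qed
    then show "psi1 \<tau> {u,v} \<in> perfect_matchings V E" "Swap (psi1 \<tau> {u,v}) (u,v) (p,q) = \<tau>" by simp_all
  qed
qed

end

lemma sigma_top: "sigma_at ori c \<sigma>k k k = \<sigma>k"
  unfolding sigma_at_def by simp

lemma sigma_step:
  assumes "1 \<le> i" "i \<le> k"
  shows "sigma_at ori c \<sigma>k k (i - 1) = Swap (sigma_at ori c \<sigma>k k i) (ori i (sigma_at ori c \<sigma>k k i)) (c i)"
proof -
  have "k - (i - 1) = Suc (k - i)" using assms by simp
  moreover have "k - (k - i) = i" using assms by simp
  ultimately show ?thesis unfolding sigma_at_def by simp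
qed

lemma ori_pair:
  assumes "ori i \<sigma> \<in> arrows {e i}"
  obtains u v where "ori i \<sigma> = (u,v)" "{u,v} = e i"
  using assms unfolding arrows_def by auto

lemma disj_ne:
  assumes "e i \<in> E" "goodG V E" "e j \<inter> e i = {}" shows "e j \<noteq> e i"
proof -
  obtain a b where "e i = {a,b}" using E_edge[OF assms(2,1)] by blast
  then show ?thesis using assms(3) by auto
qed

context
  fixes V :: "'a set" and E :: "'a set set" and e :: "nat \<Rightarrow> 'a set" and k :: nat
    and \<sigma>k :: "'a set set" and ori :: "nat \<Rightarrow> 'a set set \<Rightarrow> 'a \<times> 'a"
  assumes good: "goodG V E"
    and eE: "\<forall>i\<in>{1..k}. e i \<in> E"
    and edisj: "\<forall>i\<in>{1..k}. \<forall>j\<in>{1..k}. i \<noteq> j \<longrightarrow> e i \<inter> e j = {}"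
    and pmk: "\<sigma>k \<in> perfect_matchings V E"
    and esub: "e ` {1..k} \<subseteq> \<sigma>k"
    and oriA: "\<forall>i\<in>{1..k}. \<forall>\<sigma>. ori i \<sigma> \<in> arrows {e i}"
begin

lemma run_inv:
  assumes vr: "valid_run V E e k ori \<sigma>k c" and m: "m \<le> k"
  shows "sigma_at ori c \<sigma>k k (k - m) \<in> perfect_matchings V E \<and> (\<forall>j\<in>{1..k - m}. e j \<in> sigma_at ori c \<sigma>k k (k - m))"
  using m
proof (induction m)
  case 0
  then show ?case using pmk esub sigma_top[of ori c \<sigma>k k] by auto
next
  case (Suc m)
  define i where "i = k - m"
  have i: "1 \<le> i" "i \<le> k" "k - Suc m = i - 1" using Suc.prems unfolding i_def by auto
  let ?s = "sigma_at ori c \<sigma>k k"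
  have IH: "?s i \<in> perfect_matchings V E" "\<forall>j\<in>{1..i}. e j \<in> ?s i"
    using Suc.IH Suc.prems unfolding i_def by auto
  obtain u v where uv: "ori i (?s i) = (u,v)" "{u,v} = e i" using oriA i ori_pair by (metis atLeastAtMost_iff)
  obtain u' v' where c: "c i = (u',v')" by (cases "c i")
  have cN: "c i \<in> Nbhd V E (?s i) (ori i (?s i)) - arrows (e ` {1..<i})"
    using vr i unfolding valid_run_def by auto
  then have u'v': "{u',v'} \<in> ?s i" "Swap (?s i) (u,v) (u',v') \<in> perfect_matchings V E"
    and notj: "\<forall>j\<in>{1..<i}. {u',v'} \<noteq> e j"
    using c uv unfolding Nbhd_def arrows_def by auto
  have st: "?s (i - 1) = Swap (?s i) (u,v) (u',v')" by (simp only: sigma_step[OF i(1,2), of ori c \<sigma>k] uv c)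
  have "\<forall>j\<in>{1..i - 1}. e j \<in> ?s (i - 1)"
  proof
    fix j assume j: "j \<in> {1..i - 1}"
    have ej: "e j \<in> ?s i" using IH(2) j by auto
    have ji: "j \<in> {1..k}" "i \<in> {1..k}" "j \<noteq> i" using j i by auto
    have "e j \<inter> e i = {}" using edisj ji by blast
    then have "e j \<noteq> {u,v}" using disj_ne[of e i E V j] eE i good uv by auto
    moreover have "e j \<noteq> {u',v'}" using notj j by auto
    ultimately show "e j \<in> ?s (i - 1)" unfolding st Swap_eq using ej by blast
  qed
  then show ?case using u'v'(2) st i(3) by simp
qed

lemma run_psi:
  assumes vr: "valid_run V E e k ori \<sigma>k c" and i: "1 \<le> i" "i \<le> k"
  shows "psi1 (sigma_at ori c \<sigma>k k (i - 1)) (e i) = sigma_at ori c \<sigma>k k i"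
proof -
  let ?s = "sigma_at ori c \<sigma>k k"
  have inv: "?s i \<in> perfect_matchings V E" "\<forall>j\<in>{1..i}. e j \<in> ?s i"
    using run_inv[OF vr, of "k - i"] i by auto
  obtain u v where uv: "ori i (?s i) = (u,v)" "{u,v} = e i" using oriA i ori_pair by (metis atLeastAtMost_iff)
  obtain u' v' where c: "c i = (u',v')" by (cases "c i")
  have cN: "c i \<in> Nbhd V E (?s i) (ori i (?s i)) - arrows (e ` {1..<i})"
    using vr i unfolding valid_run_def by auto
  then have u'v': "{u',v'} \<in> ?s i" "Swap (?s i) (u,v) (u',v') \<in> perfect_matchings V E"
    using c uv unfolding Nbhd_def arrows_def by auto
  have st: "?s (i - 1) = Swap (?s i) (u,v) (u',v')" by (simp only: sigma_step[OF i(1,2), of ori c \<sigma>k] uv c)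
  have "{u,v} \<in> ?s i" using inv(2) uv i by auto
  then show ?thesis using forward_step[OF good inv(1) _ u'v'] st uv by simp
qed

lemma run_fold:
  assumes vr: "valid_run V E e k ori \<sigma>k c" and m: "m \<le> k"
  shows "fold (\<lambda>e s. psi1 s e) (map e [1..<m+1]) (sigma_at ori c \<sigma>k k 0) = sigma_at ori c \<sigma>k k m"
  using m
proof (induction m)
  case 0
  then show ?case by simp
next
  case (Suc m)
  have "[1..<Suc m + 1] = [1..<m+1] @ [Suc m]" by simp
  then show ?case using Suc run_psi[OF vr, of "Suc m"] by simp
qed

lemma run_exists:
  assumes pm0: "\<sigma>0 \<in> perfect_matchings V E" and ph: "psi_hat (map e [1..<k+1]) \<sigma>0 = \<sigma>k"
  shows "\<exists>c. valid_run V E e k ori \<sigma>k c \<and> sigma_at ori c \<sigma>k k 0 = \<sigma>0"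
proof -
  define \<tau> where "\<tau> m = fold (\<lambda>e s. psi1 s e) (map e [1..<m+1]) \<sigma>0" for m
  have \<tau>S: "\<tau> (Suc m) = psi1 (\<tau> m) (e (Suc m))" for m
  proof -
    have "[1..<Suc m + 1] = [1..<m+1] @ [Suc m]" by simp
    then show ?thesis unfolding \<tau>_def by simp
  qed
  have \<tau>0: "\<tau> 0 = \<sigma>0" unfolding \<tau>_def by simp
  have \<tau>k: "\<tau> k = \<sigma>k" using ph unfolding \<tau>_def psi_hat_def .
  have inv: "\<tau> m \<in> perfect_matchings V E \<and> (\<forall>j\<in>{1..m}. e j \<in> \<tau> m)" if "m \<le> k" for m
    using that
  proof (induction m)
    case 0
    then show ?case using pm0 \<tau>0 by simp
  next
    case (Suc m)
    have eS: "e (Suc m) \<in> E" using eE Suc.prems by auto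
    obtain u v where uv: "e (Suc m) = {u,v}" using E_edge[OF good eS] by blast
    have uvE: "{u,v} \<in> E" using eS uv by simp
    have IH: "\<tau> m \<in> perfect_matchings V E" "\<forall>j\<in>{1..m}. e j \<in> \<tau> m" using Suc by auto
    note bs = backward_step[OF good IH(1) uvE]
    have "\<forall>j\<in>{1..Suc m}. e j \<in> \<tau> (Suc m)"
    proof
      fix j assume j: "j \<in> {1..Suc m}"
      show "e j \<in> \<tau> (Suc m)"
      proof (cases "j = Suc m")
        case True
        then show ?thesis using bs(4) \<tau>S uv by simp
      next
        case False
        have ji: "j \<in> {1..k}" "Suc m \<in> {1..k}" "j \<noteq> Suc m" using j False Suc.prems by auto
        have "e j \<inter> e (Suc m) = {}" using edisj ji by blast
        then have "u \<notin> e j" "v \<notin> e j" using uv by auto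
        moreover have "e j \<in> \<tau> m" using IH(2) j False by auto
        ultimately show ?thesis using bs(7) \<tau>S uv by simp
      qed
    qed
    then show ?case using bs(3) \<tau>S uv by simp
  qed
  define c where "c i = (partner (\<tau> (i - 1)) (fst (ori i (\<tau> i))), partner (\<tau> (i - 1)) (snd (ori i (\<tau> i))))" for i
  have key: "Swap (\<tau> i) (ori i (\<tau> i)) (c i) = \<tau> (i - 1) \<and>
      c i \<in> Nbhd V E (\<tau> i) (ori i (\<tau> i)) - arrows (e ` {1..<i})" if i: "i \<in> {1..k}" for i
  proof -
    obtain u v where uv: "ori i (\<tau> i) = (u,v)" "{u,v} = e i" using oriA i ori_pair by metis
    have uvE: "{u,v} \<in> E" using eE i uv by auto
    have Ii: "Suc (i - 1) = i" using i by auto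
    have ti: "\<tau> i = psi1 (\<tau> (i - 1)) {u,v}" using \<tau>S[of "i - 1"] Ii uv by simp
    have IH: "\<tau> (i - 1) \<in> perfect_matchings V E" "\<forall>j\<in>{1..i - 1}. e j \<in> \<tau> (i - 1)" using inv[of "i - 1"] i by auto
    note bs = backward_step[OF good IH(1) uvE]
    define p where "p = partner (\<tau> (i - 1)) u"
    define q where "q = partner (\<tau> (i - 1)) v"
    have ci: "c i = (p,q)" unfolding c_def p_def q_def uv by simp
    have sw0: "Swap (\<tau> i) (u,v) (p,q) = \<tau> (i - 1)" using bs(6) ti unfolding p_def q_def by simp
    have sw: "Swap (\<tau> i) (ori i (\<tau> i)) (c i) = \<tau> (i - 1)" unfolding ci uv using sw0 .
    have inN: "c i \<in> Nbhd V E (\<tau> i) (ori i (\<tau> i))"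
    proof -
      have "{p,q} \<in> \<tau> i" using bs(5) ti unfolding p_def q_def by simp
      then show ?thesis unfolding Nbhd_def using sw IH(1) ci by simp
    qed
    have notA: "c i \<notin> arrows (e ` {1..<i})"
    proof
      assume "c i \<in> arrows (e ` {1..<i})"
      then obtain j where j: "j \<in> {1..<i}" "{p,q} = e j" unfolding ci arrows_def by auto
      have ej: "e j \<in> \<tau> (i - 1)" using IH(2) j by auto
      have up: "{u,p} \<in> \<tau> (i - 1)" using bs(1) unfolding p_def .
      have "p \<in> e j" using j by auto
      then have "{u,p} = e j" using pm_unique2[OF good IH(1) up ej, of p] by simp
      then have "u \<in> e j" by auto
      moreover have "u \<in> e i" using uv by auto
      moreover have "j \<in> {1..k}" "i \<in> {1..k}" "j \<noteq> i" using j i by auto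
      ultimately show False using edisj by blast
    qed
    show ?thesis using sw inN notA by simp
  qed
  have traj_eq: "sigma_at ori c \<sigma>k k (k - m) = \<tau> (k - m)" if "m \<le> k" for m
    using that
  proof (induction m)
    case 0
    then show ?case using sigma_top \<tau>k by simp
  next
    case (Suc m)
    define i where "i = k - m"
    have i: "1 \<le> i" "i \<le> k" "k - Suc m = i - 1" using Suc.prems unfolding i_def by auto
    have "sigma_at ori c \<sigma>k k i = \<tau> i" using Suc unfolding i_def by simp
    then have "sigma_at ori c \<sigma>k k (i - 1) = Swap (\<tau> i) (ori i (\<tau> i)) (c i)"
      using sigma_step[OF i(1,2), of ori c \<sigma>k] by simp
    also have "\<dots> = \<tau> (i - 1)" using key[of i] i by auto
    finally show ?case using i(3) by simp
  qed
  have "valid_run V E e k ori \<sigma>k c"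
    unfolding valid_run_def
  proof
    fix i assume i: "i \<in> {1..k}"
    have "sigma_at ori c \<sigma>k k i = \<tau> i" using traj_eq[of "k - i"] i by auto
    then show "c i \<in> Nbhd V E (sigma_at ori c \<sigma>k k i) (ori i (sigma_at ori c \<sigma>k k i)) - arrows (e ` {1..<i})"
      using key[OF i] by simp
  qed
  moreover have "sigma_at ori c \<sigma>k k 0 = \<sigma>0" using traj_eq[of k] \<tau>0 by simp
  ultimately show ?thesis by blast
qed

lemma run_distinct:
  assumes vr: "valid_run V E e k ori \<sigma>k c" and vr': "valid_run V E e k ori \<sigma>k c'"
    and ex: "\<exists>i\<in>{1..k}. c i \<noteq> c' i"
  shows "sigma_at ori c \<sigma>k k 0 \<noteq> sigma_at ori c' \<sigma>k k 0"
proof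
  assume eq0: "sigma_at ori c \<sigma>k k 0 = sigma_at ori c' \<sigma>k k 0"
  let ?s = "sigma_at ori c \<sigma>k k" and ?s' = "sigma_at ori c' \<sigma>k k"
  define D where "D = {i\<in>{1..k}. c i \<noteq> c' i}"
  have Dne: "D \<noteq> {}" "finite D" using ex unfolding D_def by auto
  define i0 where "i0 = Max D"
  have i0: "i0 \<in> D" using Dne unfolding i0_def by simp
  have i0r: "1 \<le> i0" "i0 \<le> k" "c i0 \<noteq> c' i0" using i0 unfolding D_def by auto
  have above: "c j = c' j" if "i0 < j" "j \<le> k" for j
  proof (rule ccontr)
    assume "c j \<noteq> c' j"
    then have "j \<in> D" using that i0r unfolding D_def by auto
    then have "j \<le> i0" using Dne unfolding i0_def by simp
    then show False using that by simp
  qed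
  have same: "?s (k - m) = ?s' (k - m)" if "m \<le> k - i0" for m
    using that
  proof (induction m)
    case 0
    then show ?case using sigma_top[of ori c \<sigma>k k] sigma_top[of ori c' \<sigma>k k] by simp
  next
    case (Suc m)
    define i where "i = k - m"
    have i: "1 \<le> i" "i \<le> k" "k - Suc m = i - 1" "i0 < i" using Suc.prems i0r unfolding i_def by auto
    have "?s i = ?s' i" using Suc unfolding i_def by simp
    moreover have "c i = c' i" using above i by simp
    ultimately have "?s (i - 1) = ?s' (i - 1)"
      using sigma_step[OF i(1,2), of ori c \<sigma>k] sigma_step[OF i(1,2), of ori c' \<sigma>k] by simp
    then show ?case using i(3) by simp
  qed
  have si0: "?s i0 = ?s' i0" using same[of "k - i0"] i0r by simp
  define \<sigma> where "\<sigma> = ?s i0"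
  have prev: "?s (i0 - 1) = ?s' (i0 - 1)"
    using run_fold[OF vr, of "i0 - 1"] run_fold[OF vr', of "i0 - 1"] eq0 i0r by simp
  obtain u v where uv: "ori i0 \<sigma> = (u,v)" by (cases "ori i0 \<sigma>")
  obtain a b where ab: "c i0 = (a,b)" by (cases "c i0")
  obtain a' b' where ab': "c' i0 = (a',b')" by (cases "c' i0")
  have inv: "\<sigma> \<in> perfect_matchings V E" using run_inv[OF vr, of "k - i0"] i0r unfolding \<sigma>_def by simp
  have cN: "c i0 \<in> Nbhd V E \<sigma> (ori i0 \<sigma>)" using vr i0r unfolding valid_run_def \<sigma>_def by auto
  have cN': "c' i0 \<in> Nbhd V E \<sigma> (ori i0 \<sigma>)" using vr' i0r si0 unfolding valid_run_def \<sigma>_def by auto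
  have A: "{a,b} \<in> \<sigma>" "Swap \<sigma> (u,v) (a,b) \<in> perfect_matchings V E"
    using cN ab uv unfolding Nbhd_def by auto
  have A': "{a',b'} \<in> \<sigma>" "Swap \<sigma> (u,v) (a',b') \<in> perfect_matchings V E"
    using cN' ab' uv unfolding Nbhd_def by auto
  have st: "?s (i0 - 1) = Swap \<sigma> (u,v) (a,b)"
    using sigma_step[OF i0r(1,2), of ori c \<sigma>k] uv ab unfolding \<sigma>_def by simp
  have st': "?s' (i0 - 1) = Swap \<sigma> (u,v) (a',b')"
    using sigma_step[OF i0r(1,2), of ori c' \<sigma>k] uv ab' si0 unfolding \<sigma>_def by simp
  have S: "Swap \<sigma> (u,v) (a,b) = Swap \<sigma> (u,v) (a',b')" using prev st st' by simp
  have "{u,a} \<in> Swap \<sigma> (u,v) (a,b)" by (simp add: Swap_eq)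
  moreover have "{u,a'} \<in> Swap \<sigma> (u,v) (a',b')" by (simp add: Swap_eq)
  ultimately have "{u,a} \<in> Swap \<sigma> (u,v) (a,b)" "{u,a'} \<in> Swap \<sigma> (u,v) (a,b)"
    using S by simp_all
  then have "a = a'" using pm_unique[OF good A(2)] by blast
  then have "b = b'" using pm_unique[OF good inv] A(1) A'(1) by blast
  then show False using \<open>a = a'\<close> ab ab' i0r(3) by simp
qed

end

theorem proposition7:
  fixes V :: "'a set" and E :: "'a set set" and n k :: nat
    and e :: "nat \<Rightarrow> 'a set" and \<sigma>k :: "'a set set"
    and ori :: "nat \<Rightarrow> 'a set set \<Rightarrow> 'a \<times> 'a"
  assumes "finite V" and "card V = 2 * n"
    and "type_P1 V E \<or> type_P2 V E"
    and "\<forall>i\<in>{1..k}. e i \<in> E"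
    and "\<forall>i\<in>{1..k}. \<forall>j\<in>{1..k}. i \<noteq> j \<longrightarrow> e i \<inter> e j = {}"
    and "\<sigma>k \<in> perfect_matchings V E"
    and "e ` {1..k} \<subseteq> \<sigma>k"
    and "\<forall>i\<in>{1..k}. \<forall>\<sigma>. ori i \<sigma> \<in> arrows {e i}"
  shows "(\<forall>c. valid_run V E e k ori \<sigma>k c \<longrightarrow>
            (\<forall>i\<in>{1..k}. e i \<in> sigma_at ori c \<sigma>k k i))
       \<and> (\<forall>\<sigma>0\<in>perfect_matchings V E.
            (\<exists>c. valid_run V E e k ori \<sigma>k c \<and> sigma_at ori c \<sigma>k k 0 = \<sigma>0)
            \<longleftrightarrow> psi_hat (map e [1..<k+1]) \<sigma>0 = \<sigma>k)
       \<and> (\<forall>c c'. valid_run V E e k ori \<sigma>k c \<and> valid_run V E e k ori \<sigma>k c'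
            \<and> (\<exists>i\<in>{1..k}. c i \<noteq> c' i)
            \<longrightarrow> sigma_at ori c \<sigma>k k 0 \<noteq> sigma_at ori c' \<sigma>k k 0)"
proof -
  have good: "goodG V E" using assms(3) P1_good P2_good by blast
  note A = good assms(4) assms(5) assms(6) assms(7) assms(8)
  have P1: "\<forall>c. valid_run V E e k ori \<sigma>k c \<longrightarrow> (\<forall>i\<in>{1..k}. e i \<in> sigma_at ori c \<sigma>k k i)"
  proof (intro allI impI ballI)
    fix c i assume vr: "valid_run V E e k ori \<sigma>k c" and i: "i \<in> {1..k}"
    have "k - (k - i) = i" using i by auto
    then show "e i \<in> sigma_at ori c \<sigma>k k i" using run_inv[OF A vr, of "k - i"] i by auto
  qed
  have P2: "\<forall>\<sigma>0\<in>perfect_matchings V E.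
            (\<exists>c. valid_run V E e k ori \<sigma>k c \<and> sigma_at ori c \<sigma>k k 0 = \<sigma>0)
            \<longleftrightarrow> psi_hat (map e [1..<k+1]) \<sigma>0 = \<sigma>k"
  proof (intro ballI iffI)
    fix \<sigma>0 assume "\<sigma>0 \<in> perfect_matchings V E"
      and "\<exists>c. valid_run V E e k ori \<sigma>k c \<and> sigma_at ori c \<sigma>k k 0 = \<sigma>0"
    then obtain c where vr: "valid_run V E e k ori \<sigma>k c" and s0: "sigma_at ori c \<sigma>k k 0 = \<sigma>0" by blast
    show "psi_hat (map e [1..<k+1]) \<sigma>0 = \<sigma>k"
      using run_fold[OF A vr, of k] s0 sigma_top[of ori c \<sigma>k k] unfolding psi_hat_def by simp
  next
    fix \<sigma>0 assume "\<sigma>0 \<in> perfect_matchings V E" "psi_hat (map e [1..<k+1]) \<sigma>0 = \<sigma>k"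
    then show "\<exists>c. valid_run V E e k ori \<sigma>k c \<and> sigma_at ori c \<sigma>k k 0 = \<sigma>0"
      using run_exists[OF A] by blast
  qed
  have P3: "\<forall>c c'. valid_run V E e k ori \<sigma>k c \<and> valid_run V E e k ori \<sigma>k c'
            \<and> (\<exists>i\<in>{1..k}. c i \<noteq> c' i)
            \<longrightarrow> sigma_at ori c \<sigma>k k 0 \<noteq> sigma_at ori c' \<sigma>k k 0"
    using run_distinct[OF A] by blast
  show ?thesis using P1 P2 P3 by blast
qed

end
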